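(* Let $A \in \mathbb{C}^{n\times n}$ and let $f(z)=\det(zI-A)$. Let $(\Gamma)$ be a closed piecewise $C^1$ Jordan curve in $\mathbb{C}$ containing no eigenvalue of $A$, and fix an origin $z_0\in(\Gamma)$. Let $\arg_0$ denote the continuous determination of the argument of $f$ along $(\Gamma)$ (i.e. the branch of $\arg(f(z))$, $z\in(\Gamma)$, obtained by continuously following $z$ along $(\Gamma)$) normalized by $\arg_0(f(z_0))=\mathrm{Arg}(f(z_0))$. For $z$ not an eigenvalue of $A$ let $R(z)=(zI-A)^{-1}$ and $\Phi_z(s)=\det(I+sR(z))$. Let $z$ and $h$ be such that the segment $[z,z+h]\subset(\Gamma)$. If $$|\mathrm{Arg}(\Phi_z(s))|<\pi \quad \text{for all } s\in[0,h]$$ (where $s\in[0,h]$ means $s=th$, $t\in[0,1]$), then $$\arg_0(f(z+h))=\arg_0(f(z))+\mathrm{Arg}(\Phi_z(h)).$$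
   Context: $\mathrm{Arg}(w)\in(-\pi,\pi]$ denotes the principal determination of the argument of a nonzero complex number $w$. Note that $f(z+h)=f(z)\,\Phi_z(h)$. *)

theory Defs
  imports "HOL-Complex_Analysis.Complex_Analysis"
begin

definition charf :: "complex^'n^'n \<Rightarrow> complex \<Rightarrow> complex" where
  "charf A z = det (mat z - A)"

definition resolvent :: "complex^'n^'n \<Rightarrow> complex \<Rightarrow> complex^'n^'n" where
  "resolvent A z = matrix_inv (mat z - A)"

definition Phi :: "complex^'n^'n \<Rightarrow> complex \<Rightarrow> complex \<Rightarrow> complex" where
  "Phi A z s = det (mat 1 + mat s ** resolvent A z)"

definition is_arg0 :: "complex^'n^'n \<Rightarrow> (real \<Rightarrow> complex) \<Rightarrow> (real \<Rightarrow> real) \<Rightarrow> bool" where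
  "is_arg0 A g \<theta> \<longleftrightarrow> continuous_on {0..1} \<theta> \<and>
     (\<forall>t\<in>{0..1}. charf A (g t) = of_real (norm (charf A (g t))) * exp (\<i> * of_real (\<theta> t))) \<and>
     \<theta> 0 = Arg (charf A (g 0))"

end

theory Submission
  imports Defs
begin

lemma mat_add_c: "mat (x + y) = (mat x + mat y :: complex^'n^'n)"
  by (simp add: mat_def vec_eq_iff)

lemma matrix_add_rdistrib_c: "((B + C) ** A) = (B ** A) + (C ** (A::complex^'n^'n))"
  by (vector matrix_matrix_mult_def sum.distrib[symmetric] field_simps)

lemma charf_shift:
  fixes A :: "complex^'n^'n"
  assumes "charf A z \<noteq> 0"
  shows "charf A (z + s) = Phi A z s * charf A z"
proof -
  let ?M = "mat z - A"
  have "invertible ?M" using assms by (simp add: charf_def invertible_det_nz)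
  hence "\<exists>A'. ?M ** A' = mat 1 \<and> A' ** ?M = mat 1" by (simp add: invertible_def)
  hence R: "?M ** resolvent A z = mat 1 \<and> resolvent A z ** ?M = mat 1"
    unfolding resolvent_def matrix_inv_def by (rule someI_ex)
  have "(mat 1 + mat s ** resolvent A z) ** ?M = ?M + mat s"
    using R by (simp add: matrix_add_rdistrib_c matrix_mul_assoc[symmetric])
  also have "\<dots> = mat (z + s) - A" by (simp add: mat_add_c)
  finally show ?thesis unfolding charf_def Phi_def
    by (metis det_mul)
qed

lemma cont_if_aux: "continuous_on S (\<lambda>x::complex. if P then x else 0)"
  by (cases P) (auto intro: continuous_intros)

lemma charf_cont: "continuous_on S (charf (A::complex^'n^'n))"
  unfolding charf_def det_def
  apply (rule continuous_on_sum)
  apply (rule continuous_on_mult[OF continuous_on_const])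
  apply (rule continuous_on_prod)
  apply (simp add: mat_def)
  apply (rule continuous_on_diff[OF cont_if_aux continuous_on_const])
  done


theorem lemma1:
  fixes A :: "complex^'n^'n" and g :: "real \<Rightarrow> complex" and \<theta> :: "real \<Rightarrow> real"
    and z h :: complex and a b :: real
  assumes "valid_path g" and "simple_path g" and "pathfinish g = pathstart g"
    and "\<forall>w\<in>path_image g. det (mat w - A) \<noteq> 0"
    and "is_arg0 A g \<theta>"
    and "a \<in> {0..1}" and "b \<in> {0..1}" and "g a = z" and "g b = z + h"
    and "g ` {min a b..max a b} = closed_segment z (z + h)"
    and "\<forall>t\<in>{0..1::real}. \<bar>Arg (Phi A z (of_real t * h))\<bar> < pi"
  shows "\<theta> b = \<theta> a + Arg (Phi A z h)"
proof -
  define I where "I = {min a b..max a b}"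
  have I01: "I \<subseteq> {0..1}" using assms(6,7) by (auto simp: I_def)
  have aI: "a \<in> I" and bI: "b \<in> I" by (auto simp: I_def)
  have gcont: "continuous_on {0..1} g"
    using assms(1) valid_path_imp_path path_def by blast
  have nz: "charf A (g t) \<noteq> 0" if "t \<in> {0..1}" for t
    using assms(4) that by (auto simp: charf_def path_image_def)
  have fz: "charf A z \<noteq> 0" using nz[OF assms(6)] assms(8) by simp
  define F where "F t = charf A (g t) / charf A z" for t
  have Fphi: "\<exists>u\<in>{0..1::real}. F t = Phi A z (of_real u * h)" if "t \<in> I" for t
  proof -
    have "g t \<in> closed_segment z (z + h)" using assms(10) that by (auto simp: I_def)
    then obtain u where u: "u \<in> {0..1}" "g t = (1 - u) *\<^sub>R z + u *\<^sub>R (z + h)"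
      unfolding closed_segment_def by auto
    hence "g t = z + of_real u * h" by (simp add: scaleR_conv_of_real algebra_simps)
    hence "F t = Phi A z (of_real u * h)"
      using charf_shift[OF fz, of "of_real u * h"] fz by (simp add: F_def)
    thus ?thesis using u by blast
  qed
  have Fnz: "F t \<noteq> 0" if "t \<in> I" for t
    using nz that I01 fz by (auto simp: F_def)
  have Fnp: "F t \<notin> \<real>\<^sub>\<le>\<^sub>0" if "t \<in> I" for t
  proof
    assume "F t \<in> \<real>\<^sub>\<le>\<^sub>0"
    hence "Arg (F t) = pi" using Fnz[OF that]
      by (auto simp: Arg_eq_pi_iff complex_nonpos_Reals_iff complex_is_Real_iff complex_eq_iff less_le)
    thus False using Fphi[OF that] assms(11) by force
  qed
  have Fcont: "continuous_on I F"
    unfolding F_def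
    by (intro continuous_intros continuous_on_compose2[OF charf_cont continuous_on_subset[OF gcont I01]]) (use fz in auto)
  have ArgFcont: "continuous_on I (\<lambda>t. Arg (F t))"
    unfolding continuous_on_eq_continuous_within
  proof
    fix t assume t: "t \<in> I"
    show "continuous (at t within I) (\<lambda>t. Arg (F t))"
      using continuous_on_eq_continuous_within[THEN iffD1, OF Fcont, rule_format, OF t]
        continuous_at_Arg[OF Fnp[OF t]]
      by (rule continuous_within_compose3[rotated])
  qed
  have thcont: "continuous_on I \<theta>"
    using assms(5) I01 continuous_on_subset unfolding is_arg0_def by blast
  define D where "D t = \<theta> t - \<theta> a - Arg (F t)" for t
  have Dcont: "continuous_on I D"
    unfolding D_def by (intro continuous_intros thcont ArgFcont)
  have polar: "charf A (g t) = of_real (norm (charf A (g t))) * exp (\<i> * of_real (\<theta> t))"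
    if "t \<in> {0..1}" for t
    using assms(5) that unfolding is_arg0_def by blast
  have Dint: "\<exists>n::int. D t = of_int (2 * n) * pi" if t: "t \<in> I" for t
  proof -
    have t01: "t \<in> {0..1}" using t I01 by auto
    have e1: "charf A (g t) = charf A z * F t" using fz by (simp add: F_def)
    have pz: "charf A z = of_real (norm (charf A z)) * exp (\<i> * of_real (\<theta> a))"
      using polar[OF assms(6)] assms(8) by simp
    have pF: "F t = of_real (norm (F t)) * exp (\<i> * of_real (Arg (F t)))"
      using Arg_eq[OF Fnz[OF t]] .
    have nn: "norm (charf A (g t)) = norm (charf A z) * norm (F t)"
      using e1 by (simp add: norm_mult)
    have "of_real (norm (charf A (g t))) * exp (\<i> * of_real (\<theta> a + Arg (F t)))
        = (of_real (norm (charf A z)) * exp (\<i> * of_real (\<theta> a))) *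
          (of_real (norm (F t)) * exp (\<i> * of_real (Arg (F t))))"
      by (simp add: nn exp_add distrib_left mult_ac)
    also have "\<dots> = charf A z * F t" using pz[symmetric] pF[symmetric] by simp
    also have "\<dots> = charf A (g t)" using e1 by simp
    also have "\<dots> = of_real (norm (charf A (g t))) * exp (\<i> * of_real (\<theta> t))"
      using polar[OF t01] .
    finally have "of_real (norm (charf A (g t))) * exp (\<i> * of_real (\<theta> t))
        = of_real (norm (charf A (g t))) * exp (\<i> * of_real (\<theta> a + Arg (F t)))" by (rule sym)
    hence "exp (\<i> * of_real (\<theta> t)) = exp (\<i> * of_real (\<theta> a + Arg (F t)))"
      using nz[OF t01] by simp
    then obtain n :: int where "\<i> * of_real (\<theta> t) = \<i> * of_real (\<theta> a + Arg (F t)) + (of_int (2 * n) * pi) * \<i>"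
      unfolding exp_eq by blast
    hence "Im (\<i> * of_real (\<theta> t)) = Im (\<i> * of_real (\<theta> a + Arg (F t)) + (of_int (2 * n) * pi) * \<i>)"
      by (rule arg_cong)
    hence "\<theta> t = \<theta> a + Arg (F t) + of_int (2 * n) * pi"
      by simp
    thus ?thesis unfolding D_def by auto
  qed
  have "D constant_on I"
  proof (rule continuous_discrete_range_constant[OF _ Dcont])
    show "connected I" by (simp add: I_def)
    fix x assume x: "x \<in> I"
    show "\<exists>e>0. \<forall>y. y \<in> I \<and> D y \<noteq> D x \<longrightarrow> e \<le> norm (D y - D x)"
    proof (intro exI[of _ "2 * pi"] conjI allI impI)
      fix y assume y: "y \<in> I \<and> D y \<noteq> D x"
      obtain n :: int where n: "D x = of_int (2 * n) * pi" using Dint x by blast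
      obtain m :: int where m: "D y = of_int (2 * m) * pi" using Dint y by blast
      have "m \<noteq> n" using y n m by auto
      hence "1 \<le> \<bar>real_of_int m - real_of_int n\<bar>" by linarith
      hence "2 * pi * 1 \<le> 2 * pi * \<bar>real_of_int m - real_of_int n\<bar>"
        by (intro mult_left_mono) auto
      also have "\<dots> = norm (D y - D x)"
      proof -
        have "D y - D x = (2 * pi) * (real_of_int m - real_of_int n)"
          using n m by (simp add: algebra_simps)
        thus ?thesis by (simp add: abs_mult)
      qed
      finally show "2 * pi \<le> norm (D y - D x)" by simp
    qed simp
  qed
  hence "D b = D a" using aI bI unfolding constant_on_def by metis
  moreover have "D a = 0" unfolding D_def F_def using fz assms(8) by simp
  moreover have "F b = Phi A z h"
    using charf_shift[OF fz, of h] fz assms(9) by (simp add: F_def)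
  ultimately show ?thesis unfolding D_def by simp
qed

end
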